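(* Let $R$ be a blind bisimulation on the nodes of a $\lambda$-graph $G$. Let $n,m,m'$ be nodes and $\tau$ a non-empty trace with $n\,R\,m$ and $m\xrightarrow{\tau}m'$. Then $n\,R\,m'$ does not hold.
   Context: A pre-$\lambda$-graph is a directed graph whose nodes are of four kinds: an application node $@(n_1,n_2)$ has exactly two children, its left child $n_1$ and its right child $n_2$; an abstraction node $\lambda(n)$ has exactly one child, its body $n$; a free variable node has no children and carries an atom $\mathrm{id}(n)$ from a fixed set of atoms, distinct free variable nodes carrying distinct atoms; a bound variable node $\mathrm{var}(l)$ has exactly one outgoing binding edge, to an abstraction node $l$ (its binder). A trace is a finite sequence of directions from $\{\swarrow,\downarrow,\searrow\}$; $\epsilon$ is the empty trace and $d\cdot\tau$ is the trace $\tau$ extended by one final step $d$. Paths $n\xrightarrow{\tau}m$ are defined inductively: $n\xrightarrow{\epsilon}n$; if $n\xrightarrow{\tau}\lambda(m)$ then $n\xrightarrow{\downarrow\cdot\tau}m$; if $n\xrightarrow{\tau}@(m_1,m_2)$ then $n\xrightarrow{\swarrow\cdot\tau}m_1$ and $n\xrightarrow{\searrow\cdot\tau}m_2$ (binding edges are never followed). The path $n\xrightarrow{\tau}$ crosses a node $m$ if either $n\xrightarrow{\tau}m$, or $\tau=d\cdot\tau'$ and $n\xrightarrow{\tau'}$ crosses $m$. A root is a node $r$ such that the only path ending in $r$ has the empty trace. A node $m$ dominates $n$ if every path from a root to $n$ crosses $m$. A $\lambda$-graph is a pre-$\lambda$-graph that has finitely many nodes, is acyclic ($n\xrightarrow{\tau}n$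 holds only for $\tau=\epsilon$), and is dominated (every bound variable node $\mathrm{var}(l)$ is dominated by its binder $l$). Two nodes are homogeneous if both are application nodes, or both abstraction nodes, or both free variable nodes, or both bound variable nodes; a binary relation $R$ on nodes is homogeneous if it only relates homogeneous nodes. Rules: $(\swarrow)$: $@(n_1,n_2)\,R\,@(m_1,m_2)$ implies $n_1\,R\,m_1$; $(\searrow)$: $@(n_1,n_2)\,R\,@(m_1,m_2)$ implies $n_2\,R\,m_2$; $(\downarrow)$: $\lambda(n)\,R\,\lambda(m)$ implies $n\,R\,m$. $R$ is propagated if closed under $(\swarrow),(\downarrow),(\searrow)$. A blind bisimulation is a homogeneous propagated relation. *)

theory Defs
  imports Main
begin

text \<open>A pre-lambda-graph over node type 'n (the nodes of the graph are all elements
of 'n) and atoms 'a is given by a labelling function assigning each node its kind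
and outgoing edges.\<close>

datatype ('n, 'a) node =
    App 'n 'n
  | Abs 'n
  | FVar 'a
  | BVar 'n

type_synonym ('n, 'a) graph = "'n \<Rightarrow> ('n, 'a) node"

datatype dir = SW | Down | SE

text \<open>Traces are lists of directions; the trace d.tau (tau extended by one final
step d) is represented as d # tau.\<close>
type_synonym trace = "dir list"

inductive path :: "('n, 'a) graph \<Rightarrow> 'n \<Rightarrow> trace \<Rightarrow> 'n \<Rightarrow> bool" for G where
  path_eps: "path G n [] n"
| path_down: "path G n \<tau> m \<Longrightarrow> G m = Abs m' \<Longrightarrow> path G n (Down # \<tau>) m'"
| path_sw: "path G n \<tau> m \<Longrightarrow> G m = App m1 m2 \<Longrightarrow> path G n (SW # \<tau>) m1"
| path_se: "path G n \<tau> m \<Longrightarrow> G m = App m1 m2 \<Longrightarrow> path G n (SE # \<tau>) m2"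

fun crosses :: "('n, 'a) graph \<Rightarrow> 'n \<Rightarrow> trace \<Rightarrow> 'n \<Rightarrow> bool" where
  "crosses G n [] m = path G n [] m"
| "crosses G n (d # \<tau>) m = (path G n (d # \<tau>) m \<or> crosses G n \<tau> m)"

definition is_root :: "('n, 'a) graph \<Rightarrow> 'n \<Rightarrow> bool" where
  "is_root G r \<longleftrightarrow> (\<forall>n \<tau>. path G n \<tau> r \<longrightarrow> \<tau> = [])"

definition dominates :: "('n, 'a) graph \<Rightarrow> 'n \<Rightarrow> 'n \<Rightarrow> bool" where
  "dominates G m n \<longleftrightarrow> (\<forall>r \<tau>. is_root G r \<longrightarrow> path G r \<tau> n \<longrightarrow> crosses G r \<tau> m)"

definition is_abs :: "('n, 'a) node \<Rightarrow> bool" where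
  "is_abs k \<longleftrightarrow> (\<exists>b. k = Abs b)"

definition pre_lambda_graph :: "('n, 'a) graph \<Rightarrow> bool" where
  "pre_lambda_graph G \<longleftrightarrow>
     (\<forall>n l. G n = BVar l \<longrightarrow> is_abs (G l)) \<and>
     (\<forall>n m a. G n = FVar a \<longrightarrow> G m = FVar a \<longrightarrow> n = m)"

definition lambda_graph :: "('n::finite, 'a) graph \<Rightarrow> bool" where
  "lambda_graph G \<longleftrightarrow> pre_lambda_graph G \<and>
     (\<forall>n \<tau>. path G n \<tau> n \<longrightarrow> \<tau> = []) \<and>
     (\<forall>n l. G n = BVar l \<longrightarrow> dominates G l n)"

fun same_kind :: "('n, 'a) node \<Rightarrow> ('n, 'a) node \<Rightarrow> bool" where
  "same_kind (App _ _) (App _ _) = True"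
| "same_kind (Abs _) (Abs _) = True"
| "same_kind (FVar _) (FVar _) = True"
| "same_kind (BVar _) (BVar _) = True"
| "same_kind _ _ = False"

definition homogeneous :: "('n, 'a) graph \<Rightarrow> ('n \<Rightarrow> 'n \<Rightarrow> bool) \<Rightarrow> bool" where
  "homogeneous G R \<longleftrightarrow> (\<forall>n m. R n m \<longrightarrow> same_kind (G n) (G m))"

definition propagated :: "('n, 'a) graph \<Rightarrow> ('n \<Rightarrow> 'n \<Rightarrow> bool) \<Rightarrow> bool" where
  "propagated G R \<longleftrightarrow>
     (\<forall>n m n1 n2 m1 m2. R n m \<longrightarrow> G n = App n1 n2 \<longrightarrow> G m = App m1 m2 \<longrightarrow> R n1 m1) \<and>
     (\<forall>n m n1 n2 m1 m2. R n m \<longrightarrow> G n = App n1 n2 \<longrightarrow> G m = App m1 m2 \<longrightarrow> R n2 m2) \<and>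
     (\<forall>n m n' m'. R n m \<longrightarrow> G n = Abs n' \<longrightarrow> G m = Abs m' \<longrightarrow> R n' m')"

definition blind_bisim :: "('n, 'a) graph \<Rightarrow> ('n \<Rightarrow> 'n \<Rightarrow> bool) \<Rightarrow> bool" where
  "blind_bisim G R \<longleftrightarrow> homogeneous G R \<and> propagated G R"

end

theory Submission
  imports Defs
begin

lemma path_app: "path G y \<rho> z \<Longrightarrow> path G x \<sigma> y \<Longrightarrow> path G x (\<rho> @ \<sigma>) z"
  by (induction rule: path.induct) (auto intro: path.intros)

lemma path_split: "path G x (\<rho> @ \<sigma>) z \<Longrightarrow> \<exists>y. path G x \<sigma> y \<and> path G y \<rho> z"
proof (induction \<rho> arbitrary: z)
  case Nil thus ?case by (auto intro: path.intros)
next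
  case (Cons d \<rho>)
  from Cons.prems show ?case
    by (cases rule: path.cases) (auto dest!: Cons.IH intro: path.intros)
qed

lemma path_det: "path G x \<sigma> y \<Longrightarrow> path G x \<sigma> y' \<Longrightarrow> y = y'"
proof (induction arbitrary: y' rule: path.induct)
  case (path_eps n) thus ?case by (cases rule: path.cases) auto
next
  case (path_down n \<tau> m m') from path_down.prems show ?case
    by (cases rule: path.cases) (use path_down in auto)
next
  case (path_sw n \<tau> m m1 m2) from path_sw.prems show ?case
    by (cases rule: path.cases) (use path_sw in auto)
next
  case (path_se n \<tau> m m1 m2) from path_se.prems show ?case
    by (cases rule: path.cases) (use path_se in auto)
qed

lemma transfer_l:
  assumes bb: "blind_bisim G R"
  shows "path G m \<sigma> m2 \<Longrightarrow> R n m \<Longrightarrow> \<exists>n2. path G n \<sigma> n2 \<and> R n2 m2"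
proof (induction rule: path.induct)
  case (path_eps x) thus ?case by (auto intro: path.intros)
next
  case (path_down x \<tau> w w')
  then obtain n2 where p: "path G n \<tau> n2" "R n2 w" by auto
  with bb path_down obtain b where "G n2 = Abs b"
    unfolding blind_bisim_def homogeneous_def by (cases "G n2") force+
  with p bb path_down show ?case
    unfolding blind_bisim_def propagated_def by (blast intro: path.intros)
next
  case (path_sw x \<tau> w w1 w2)
  then obtain n2 where p: "path G n \<tau> n2" "R n2 w" by auto
  with bb path_sw obtain b c where "G n2 = App b c"
    unfolding blind_bisim_def homogeneous_def by (cases "G n2") force+
  with p bb path_sw show ?case
    unfolding blind_bisim_def propagated_def by (blast intro: path.intros)
next
  case (path_se x \<tau> w w1 w2)
  then obtain n2 where p: "path G n \<tau> n2" "R n2 w" by auto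
  with bb path_se obtain b c where "G n2 = App b c"
    unfolding blind_bisim_def homogeneous_def by (cases "G n2") force+
  with p bb path_se show ?case
    unfolding blind_bisim_def propagated_def by (blast intro: path.intros)
qed

lemma transfer_r:
  assumes bb: "blind_bisim G R"
  shows "path G n \<sigma> n2 \<Longrightarrow> R n m \<Longrightarrow> \<exists>m2. path G m \<sigma> m2 \<and> R n2 m2"
proof (induction rule: path.induct)
  case (path_eps x) thus ?case by (auto intro: path.intros)
next
  case (path_down x \<tau> w w')
  then obtain n2 where p: "path G m \<tau> n2" "R w n2" by auto
  with bb path_down obtain b where "G n2 = Abs b"
    unfolding blind_bisim_def homogeneous_def by (cases "G n2") force+
  with p bb path_down show ?case
    unfolding blind_bisim_def propagated_def by (blast intro: path.intros)
next
  case (path_sw x \<tau> w w1 w2)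
  then obtain n2 where p: "path G m \<tau> n2" "R w n2" by auto
  with bb path_sw obtain b c where "G n2 = App b c"
    unfolding blind_bisim_def homogeneous_def by (cases "G n2") force+
  with p bb path_sw show ?case
    unfolding blind_bisim_def propagated_def by (blast intro: path.intros)
next
  case (path_se x \<tau> w w1 w2)
  then obtain n2 where p: "path G m \<tau> n2" "R w n2" by auto
  with bb path_se obtain b c where "G n2 = App b c"
    unfolding blind_bisim_def homogeneous_def by (cases "G n2") force+
  with p bb path_se show ?case
    unfolding blind_bisim_def propagated_def by (blast intro: path.intros)
qed

theorem mainTheorem7:
  fixes G :: "('n::finite, 'a) graph" and R :: "'n \<Rightarrow> 'n \<Rightarrow> bool"
    and n m m' :: 'n and \<tau> :: trace
  assumes "lambda_graph G"
    and "blind_bisim G R"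
    and "\<tau> \<noteq> []"
    and "R n m"
    and "path G m \<tau> m'"
  shows "\<not> R n m'"
proof
  assume R': "R n m'"
  define P where "P k = concat (replicate k \<tau>)" for k
  have ex: "\<exists>a. path G n (P k) a" for k
  proof (induction k)
    case 0 thus ?case by (auto simp: P_def intro: path.intros)
  next
    case (Suc k)
    then obtain a where "path G n (P k) a" by auto
    from transfer_r[OF assms(2) this R'] obtain b where "path G m' (P k) b" by auto
    from path_app[OF this assms(5)] have "path G m (P k @ \<tau>) b" .
    moreover have "P k @ \<tau> = P (Suc k)"
      by (simp add: P_def flip: replicate_append_same)
    ultimately have "path G m (P (Suc k)) b" by simp
    from transfer_l[OF assms(2) this assms(4)] show ?case by auto
  qed
  define a where "a k = (SOME x. path G n (P k) x)" for k
  have pa: "path G n (P k) (a k)" for k unfolding a_def using ex someI_ex by metis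
  have "\<not> inj a"
  proof
    assume "inj a"
    hence "finite (UNIV :: nat set)"
      using finite_imageD[of a UNIV] by (simp add: finite_subset)
    thus False by simp
  qed
  then obtain i j where ij: "a i = a j" "i < j"
    unfolding inj_def by (metis linorder_neqE_nat)
  have "P j = P (j - i) @ P i"
  proof -
    have "j = (j - i) + i" using ij(2) by simp
    hence "replicate j \<tau> = replicate (j - i) \<tau> @ replicate i \<tau>"
      by (metis replicate_add)
    thus ?thesis by (simp add: P_def)
  qed
  with pa[of j] obtain y where y: "path G n (P i) y" "path G y (P (j - i)) (a j)"
    using path_split by metis
  from path_det[OF y(1) pa[of i]] y(2) ij(1) have "path G (a i) (P (j - i)) (a i)" by simp
  with assms(1) have "P (j - i) = []" unfolding lambda_graph_def by blast
  with ij(2) assms(3) show False by (simp add: P_def)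
qed

end
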